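(* Let $x$ and $y$ be two infinite words over a finite alphabet $A$. Suppose there are symbols $c,c',d\in A$ and an increasing sequence of integers $(m_n)_{n\ge0}$ such that the limits $$\lim_{n\to\infty}\frac{|\{1\le i\le m_n: x[i]=c,\ y[i]=d\}|}{m_n}\quad\text{and}\quad \lim_{n\to\infty}\frac{|\{1\le i\le m_n: x[i]=c',\ y[i]=d\}|}{m_n}$$ exist and are different. Then $\rho(x/y)<1$.
   Context: $x[i]$ is the symbol at position $i$ (positions start at 1). A $k$-automaton $\langle Q,A,\delta,I\rangle$ has finite state set $Q$, transitions $\delta\subseteq Q\times(A\cup\{\varepsilon\})^k\times Q$, initial states $I$; an infinite run is accepting if it starts in $I$ and all label components are infinite. It is $2$-deterministic if $I$ is a singleton and, for two transitions from the same state with labels $(\alpha_i),(\alpha'_i)$, $\alpha_j=\varepsilon$ for some $j\le2$ implies $\alpha'_j=\varepsilon$, and $\alpha_1=\alpha'_1,\alpha_2=\alpha'_2$ implies $\alpha_3=\alpha'_3$ and equal targets. A compressor is a $2$-deterministic $3$-automaton $\mathcal C$ (input $x$, oracle $y$, output) such that for each fixed $y$ the map $x\mapsto\mathcal C(x,y)$ is injective. For the accepting run $q_0\xrightarrow{\alpha_1,\beta_1|w_1}q_1\cdots$ with $x=\alpha_1\alpha_2\cdots$, $y=\beta_1\beta_2\cdots$, $\rho_{\mathcal C}(x/y)=\liminf_n|w_1\cdots w_n|/|\alpha_1\cdots\alpha_n|$; $\rho(x/y)$ is the infimum over all compressors. *)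

theory Defs
  imports "HOL-Analysis.Analysis" "HOL-Library.Infinite_Set"
begin

text \<open>Labels of a 3-automaton: each component is a symbol or epsilon (None).\<close>
type_synonym 'a lab3 = "'a option \<times> 'a option \<times> 'a option"

text \<open>A 3-automaton over alphabet A; states are encoded as natural numbers
  (any finite state set can be so encoded).\<close>
record 'a aut3 =
  states :: "nat set"
  trans  :: "(nat \<times> 'a lab3 \<times> nat) set"
  init   :: "nat set"

definition opt_ok :: "'a set \<Rightarrow> 'a option \<Rightarrow> bool" where
  "opt_ok A o' \<longleftrightarrow> (case o' of None \<Rightarrow> True | Some a \<Rightarrow> a \<in> A)"

definition is_aut3 :: "'a set \<Rightarrow> 'a aut3 \<Rightarrow> bool" where
  "is_aut3 A M \<longleftrightarrow> finite (states M) \<and> init M \<subseteq> states M \<and>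
     (\<forall>p l q. (p, l, q) \<in> trans M \<longrightarrow>
        p \<in> states M \<and> q \<in> states M \<and>
        opt_ok A (fst l) \<and> opt_ok A (fst (snd l)) \<and> opt_ok A (snd (snd l)))"

definition two_det :: "'a aut3 \<Rightarrow> bool" where
  "two_det M \<longleftrightarrow> (\<exists>q0. init M = {q0}) \<and>
     (\<forall>p a1 a2 a3 q b1 b2 b3 q'.
        (p, (a1, a2, a3), q) \<in> trans M \<longrightarrow> (p, (b1, b2, b3), q') \<in> trans M \<longrightarrow>
          (a1 = None \<longrightarrow> b1 = None) \<and> (a2 = None \<longrightarrow> b2 = None) \<and>
          (a1 = b1 \<and> a2 = b2 \<longrightarrow> a3 = b3 \<and> q = q'))"

text \<open>Infinite word (0-indexed) obtained by concatenating the non-epsilon entries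
  of a sequence of labels.\<close>
definition opt_word :: "(nat \<Rightarrow> 'a option) \<Rightarrow> nat \<Rightarrow> 'a" where
  "opt_word s j = the (s (enumerate {n. s n \<noteq> None} j))"

definition opt_len :: "(nat \<Rightarrow> 'a option) \<Rightarrow> nat \<Rightarrow> nat" where
  "opt_len s n = card {i. i < n \<and> s i \<noteq> None}"

definition comp1 :: "(nat \<Rightarrow> 'a lab3) \<Rightarrow> nat \<Rightarrow> 'a option" where
  "comp1 ls n = fst (ls n)"
definition comp2 :: "(nat \<Rightarrow> 'a lab3) \<Rightarrow> nat \<Rightarrow> 'a option" where
  "comp2 ls n = fst (snd (ls n))"
definition comp3 :: "(nat \<Rightarrow> 'a lab3) \<Rightarrow> nat \<Rightarrow> 'a option" where
  "comp3 ls n = snd (snd (ls n))"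

definition accepting :: "'a aut3 \<Rightarrow> (nat \<Rightarrow> nat) \<Rightarrow> (nat \<Rightarrow> 'a lab3) \<Rightarrow> bool" where
  "accepting M qs ls \<longleftrightarrow> qs 0 \<in> init M \<and> (\<forall>n. (qs n, ls n, qs (Suc n)) \<in> trans M) \<and>
     infinite {n. comp1 ls n \<noteq> None} \<and> infinite {n. comp2 ls n \<noteq> None} \<and>
     infinite {n. comp3 ls n \<noteq> None}"

definition compressor :: "'a set \<Rightarrow> 'a aut3 \<Rightarrow> bool" where
  "compressor A M \<longleftrightarrow> is_aut3 A M \<and> two_det M \<and>
     (\<forall>qs ls qs' ls'. accepting M qs ls \<longrightarrow> accepting M qs' ls' \<longrightarrow>
        opt_word (comp2 ls) = opt_word (comp2 ls') \<longrightarrow>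
        opt_word (comp3 ls) = opt_word (comp3 ls') \<longrightarrow>
        opt_word (comp1 ls) = opt_word (comp1 ls'))"

definition run_ratio :: "(nat \<Rightarrow> 'a lab3) \<Rightarrow> ereal" where
  "run_ratio ls = liminf (\<lambda>n. ereal (real (opt_len (comp3 ls) n) / real (opt_len (comp1 ls) n)))"

text \<open>rho(x/y): infimum over compressors of the ratio of the accepting run on (x,y)
  (unique by 2-determinism).\<close>
definition rho :: "'a set \<Rightarrow> (nat \<Rightarrow> 'a) \<Rightarrow> (nat \<Rightarrow> 'a) \<Rightarrow> ereal" where
  "rho A x y = Inf {run_ratio ls | M qs ls. compressor A M \<and> accepting M qs ls \<and>
       opt_word (comp1 ls) = x \<and> opt_word (comp2 ls) = y}"

end

theory Submission
  imports Defs
begin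


lemma opt_len_Suc: "opt_len s (Suc n) = opt_len s n + (if s n = None then 0 else 1)"
proof -
  have "{i. i < Suc n \<and> s i \<noteq> None} = {i. i < n \<and> s i \<noteq> None} \<union> (if s n = None then {} else {n})"
    by (auto simp: less_Suc_eq)
  then show ?thesis unfolding opt_len_def by (auto simp: card_insert_if)
qed

lemma opt_len_0[simp]: "opt_len s 0 = 0" by (simp add: opt_len_def)

lemma enumerate_card_eq:
  fixes S :: "nat set"
  assumes S: "infinite S" and n: "n \<in> S"
  shows "enumerate S (card {m\<in>S. m < n}) = n"
proof -
  obtain i where i: "enumerate S i = n" using enumerate_Ex[OF S n] by blast
  have "{m\<in>S. m < n} = enumerate S ` {..<i}"
  proof
    show "{m \<in> S. m < n} \<subseteq> enumerate S ` {..<i}"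
    proof
      fix m assume m: "m \<in> {m \<in> S. m < n}"
      then obtain j where j: "enumerate S j = m" using enumerate_Ex[OF S] by blast
      have "j < i" using m j i S by (metis enumerate_mono_iff mem_Collect_eq)
      then show "m \<in> enumerate S ` {..<i}" using j by auto
    qed
    show "enumerate S ` {..<i} \<subseteq> {m \<in> S. m < n}"
      using i S enumerate_in_set by (auto)
  qed
  moreover have "card (enumerate S ` {..<i}) = i"
    using inj_enumerate[OF S] by (simp add: card_image inj_on_subset)
  ultimately show ?thesis using i by simp
qed

lemma opt_word_at:
  assumes inf: "infinite {n. s n \<noteq> None}" and sn: "s n \<noteq> None"
  shows "opt_word s (opt_len s n) = the (s n)"
proof -
  have "opt_len s n = card {m\<in>{n. s n \<noteq> None}. m < n}"
    unfolding opt_len_def by (rule arg_cong[where f=card]) auto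
  then show ?thesis unfolding opt_word_def using enumerate_card_eq[OF inf] sn by simp
qed



definition ee :: "'a \<Rightarrow> 'a \<Rightarrow> 'a \<Rightarrow> 'a \<Rightarrow> 'a \<Rightarrow> real" where
  "ee c c' d b a = (if b = d \<and> a = c then 1 else if b = d \<and> a = c' then -1 else 0)"

definition Dl :: "'a \<Rightarrow> 'a \<Rightarrow> 'a \<Rightarrow> 'a list \<Rightarrow> 'a list \<Rightarrow> real" where
  "Dl c c' d u v = (\<Sum>j<length u. ee c c' d (u!j) (v!j))"

lemma sum_prod_lists:
  assumes "finite A"
  shows "(\<Sum>v\<in>{v. set v \<subseteq> A \<and> length v = n}. \<Prod>j<n. F j (v!j)) = (\<Prod>j<n. \<Sum>a\<in>A. (F j a :: real))"
proof (induction n arbitrary: F)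
  case 0
  have "{v. set v \<subseteq> A \<and> length v = 0} = {[]}" by auto
  then show ?case by simp
next
  case (Suc n)
  let ?L = "{v. set v \<subseteq> A \<and> length v = n}"
  have inj: "inj_on (\<lambda>(xs, n). n#xs) (?L \<times> A)" by (auto simp: inj_on_def)
  have "(\<Sum>v\<in>{v. set v \<subseteq> A \<and> length v = Suc n}. \<Prod>j<Suc n. F j (v!j))
      = (\<Sum>p\<in>?L \<times> A. \<Prod>j<Suc n. F j ((snd p # fst p)!j))"
    unfolding lists_length_Suc_eq by (subst sum.reindex[OF inj]) (simp add: case_prod_beta)
  also have "\<dots> = (\<Sum>p\<in>?L \<times> A. F 0 (snd p) * (\<Prod>j<n. F (Suc j) (fst p ! j)))"
    by (subst prod.lessThan_Suc_shift) simp
  also have "\<dots> = (\<Sum>v\<in>?L. \<Sum>a\<in>A. F 0 a * (\<Prod>j<n. F (Suc j) (v ! j)))"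
    by (simp add: sum.cartesian_product case_prod_beta)
  also have "\<dots> = (\<Sum>a\<in>A. F 0 a) * (\<Sum>v\<in>?L. (\<Prod>j<n. F (Suc j) (v ! j)))"
    by (simp add: sum_distrib_left sum_distrib_right mult.commute)
  also have "\<dots> = (\<Sum>a\<in>A. F 0 a) * (\<Prod>j<n. \<Sum>a\<in>A. F (Suc j) a)"
    using Suc.IH[of "\<lambda>j. F (Suc j)"] by simp
  also have "\<dots> = (\<Prod>j<Suc n. \<Sum>a\<in>A. F j a)"
    by (subst prod.lessThan_Suc_shift) simp
  finally show ?case .
qed

lemma sum_ee_bound:
  assumes A: "finite A" "c \<in> A" "c' \<in> A" "c \<noteq> c'" and z: "z \<ge> 1"
  shows "(\<Sum>a\<in>A. z powr ee c c' d b a) \<le> real (card A) + z + 1/z - 2"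
proof -
  have zz: "z + 1/z \<ge> 2"
  proof -
    have "(z - 1)^2 \<ge> 0" by simp
    then have "z*z + 1 \<ge> 2 * z" by (simp add: power2_eq_square algebra_simps)
    then show ?thesis using z by (simp add: field_simps)
  qed
  show ?thesis
  proof (cases "b = d")
    case False
    then have "(\<Sum>a\<in>A. z powr ee c c' d b a) = real (card A)" using z by (simp add: ee_def)
    then show ?thesis using zz by simp
  next
    case True
    have cA: "card A \<ge> 2"
    proof -
      have "{c, c'} \<subseteq> A" using A by auto
      then have "card {c,c'} \<le> card A" using A(1) card_mono by blast
      then show ?thesis using A(4) by simp
    qed
    have "(\<Sum>a\<in>A. z powr ee c c' d b a) = z powr ee c c' d b c + (\<Sum>a\<in>A-{c}. z powr ee c c' d b a)"
      using A by (simp add: sum.remove)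
    also have "(\<Sum>a\<in>A-{c}. z powr ee c c' d b a) = z powr ee c c' d b c' + (\<Sum>a\<in>A-{c}-{c'}. z powr ee c c' d b a)"
      using A by (subst sum.remove[of "A-{c}" c']) auto
    also have "(\<Sum>a\<in>A-{c}-{c'}. z powr ee c c' d b a) = real (card (A-{c}-{c'}))"
      using z by (simp add: ee_def)
    also have "card (A-{c}-{c'}) = card A - 2" using A by (simp add: card_Diff_singleton_if)
    finally show ?thesis using True A z cA by (simp add: ee_def powr_minus divide_inverse of_nat_diff)
  qed
qed

lemma markov_count:
  assumes A: "finite A" "c \<in> A" "c' \<in> A" "c \<noteq> c'" and z: "z \<ge> 1"
  shows "real (card {v. set v \<subseteq> A \<and> length v = length u \<and> Dl c c' d u v \<ge> real h}) * z^h
     \<le> (real (card A) + z + 1/z - 2) ^ length u"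
proof -
  let ?n = "length u"
  let ?L = "{v. set v \<subseteq> A \<and> length v = ?n}"
  let ?G = "{v. set v \<subseteq> A \<and> length v = ?n \<and> Dl c c' d u v \<ge> real h}"
  let ?K = "real (card A) + z + 1/z - 2"
  have fL: "finite ?L" using finite_lists_length_eq[OF A(1)] .
  have GL: "?G \<subseteq> ?L" by auto
  have fG: "finite ?G" using finite_subset[OF GL fL] .
  have "real (card ?G) * z^h = (\<Sum>v\<in>?G. z powr real h)"
    using z by (simp add: powr_realpow)
  also have "\<dots> \<le> (\<Sum>v\<in>?G. z powr Dl c c' d u v)"
    by (rule sum_mono) (use z in \<open>auto intro: powr_mono\<close>)
  also have "\<dots> \<le> (\<Sum>v\<in>?L. z powr Dl c c' d u v)"
    by (rule sum_mono2[OF fL GL]) auto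
  also have "\<dots> = (\<Sum>v\<in>?L. \<Prod>j<?n. z powr ee c c' d (u!j) (v!j))"
    using z by (simp add: Dl_def powr_sum)
  also have "\<dots> = (\<Prod>j<?n. \<Sum>a\<in>A. z powr ee c c' d (u!j) a)"
    by (rule sum_prod_lists[OF A(1)])
  also have "\<dots> \<le> (\<Prod>j<?n. ?K)"
    by (rule prod_mono) (use sum_ee_bound[OF A z] in \<open>auto intro: sum_nonneg\<close>)
  also have "\<dots> = ?K ^ ?n" by simp
  finally show ?thesis .
qed



datatype 'b st = Rd "'b list" "'b list" | Em "'b list" nat

locale cmp =
  fixes A :: "'a set" and c c' d :: 'a and l t h :: nat
  assumes finA: "finite A" and cA: "c \<in> A" and c'A: "c' \<in> A" and dA: "d \<in> A" and cc: "c \<noteq> c'"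
    and tl: "t < l"
    and cardG: "\<And>u. length u = l \<Longrightarrow> card {v. set v \<subseteq> A \<and> length v = l \<and> Dl c c' d u v \<ge> real h}
                   \<le> card {w. set w \<subseteq> A \<and> length w = l - t \<and> hd w \<noteq> c}"
begin

definition Good where "Good u = {v. length u = l \<and> set v \<subseteq> A \<and> length v = l \<and> Dl c c' d u v \<ge> real h}"
definition T where "T = {w. set w \<subseteq> A \<and> length w = l - t \<and> hd w \<noteq> c}"
definition encf where "encf u = (SOME f. f ` Good u \<subseteq> T \<and> inj_on f (Good u))"
definition code where "code u v = (if v \<in> Good u then encf u v else c # v)"

lemma finT: "finite T"
proof -
  have "T \<subseteq> {w. set w \<subseteq> A \<and> length w = l - t}" unfolding T_def by auto
  then show ?thesis using finite_lists_length_eq[OF finA] finite_subset by blast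
qed

lemma finGood: "finite (Good u)"
proof -
  have "Good u \<subseteq> {w. set w \<subseteq> A \<and> length w = l}" unfolding Good_def by auto
  then show ?thesis using finite_lists_length_eq[OF finA] finite_subset by blast
qed

lemma encf_prop: "encf u ` Good u \<subseteq> T \<and> inj_on (encf u) (Good u)"
proof -
  have "\<exists>f. f ` Good u \<subseteq> T \<and> inj_on f (Good u)"
  proof (rule card_le_inj[OF finGood finT])
    show "card (Good u) \<le> card T"
    proof (cases "length u = l")
      case True
      then show ?thesis using cardG[OF True] by (simp add: Good_def T_def)
    next
      case False
      then show ?thesis by (simp add: Good_def)
    qed
  qed
  then show ?thesis unfolding encf_def by (rule someI_ex)
qed

lemma code_props:
  assumes "set v \<subseteq> A" "length v = l"
  shows "set (code u v) \<subseteq> A" "length (code u v) = (if v \<in> Good u then l - t else Suc l)"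
    "code u v \<noteq> []" "hd (code u v) = c \<longleftrightarrow> v \<notin> Good u" "length (code u v) \<le> Suc l"
    "length (code u v) \<ge> 1"
proof -
  have T: "v \<in> Good u \<Longrightarrow> encf u v \<in> T" using encf_prop by blast
  show "set (code u v) \<subseteq> A" using T assms cA by (auto simp: code_def T_def)
  show L: "length (code u v) = (if v \<in> Good u then l - t else Suc l)"
    using T assms by (auto simp: code_def T_def)
  then show "code u v \<noteq> []" using tl by (auto split: if_splits)
  then show "hd (code u v) = c \<longleftrightarrow> v \<notin> Good u" using T by (auto simp: code_def T_def)
  show "length (code u v) \<le> Suc l" using L by auto
  show "length (code u v) \<ge> 1" using L tl by auto
qed

lemma code_inj:
  assumes "set v \<subseteq> A" "length v = l" "set v' \<subseteq> A" "length v' = l" "code u v = code u v'"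
  shows "v = v'"
proof -
  have "v \<in> Good u \<longleftrightarrow> v' \<in> Good u" using code_props(4)[OF assms(1,2), of u] code_props(4)[OF assms(3,4), of u] assms(5)
    by simp
  then show ?thesis
    using assms(5) encf_prop[of u] unfolding code_def by (auto split: if_splits simp: inj_on_def)
qed

definition SS where
  "SS = {Rd xs ys | xs ys. set xs \<subseteq> A \<and> set ys \<subseteq> A \<and> length xs = length ys \<and> length xs < l}
      \<union> {Em w i | w i. set w \<subseteq> A \<and> length w \<le> Suc l \<and> i \<le> l}"

lemma finSS: "finite SS"
proof -
  let ?B = "{xs. set xs \<subseteq> A \<and> length xs \<le> Suc l}"
  have fB: "finite ?B" using finite_lists_length_le[OF finA] .
  have "SS \<subseteq> (\<lambda>(xs, ys). Rd xs ys) ` (?B \<times> ?B) \<union> (\<lambda>(w, i). Em w i) ` (?B \<times> {..l})"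
    unfolding SS_def by force
  moreover have "finite ((\<lambda>(xs, ys). Rd xs ys) ` (?B \<times> ?B) \<union> (\<lambda>(w, i). Em w i) ` (?B \<times> {..l}))"
    using fB by auto
  ultimately show ?thesis using finite_subset by blast
qed

definition enc where "enc = to_nat_on SS"

lemma enc_inj: "inj_on enc SS"
  unfolding enc_def using finSS by (simp add: countable_finite inj_on_to_nat_on)

definition stp :: "'a st \<Rightarrow> 'a lab3 \<Rightarrow> 'a st \<Rightarrow> bool" where
  "stp s lab s' \<longleftrightarrow> (case s of
     Rd xs ys \<Rightarrow> (\<exists>a b. a \<in> A \<and> b \<in> A \<and> lab = (Some a, Some b, None) \<and>
        s' = (if Suc (length xs) = l then Em (code (ys@[b]) (xs@[a])) 0 else Rd (xs@[a]) (ys@[b])))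
   | Em w i \<Rightarrow> lab = (None, None, if i < length w then Some (w!i) else None) \<and>
        s' = (if i = l then Rd [] [] else Em w (Suc i)))"

lemma stp_SS: "s \<in> SS \<Longrightarrow> stp s lab s' \<Longrightarrow> s' \<in> SS"
proof -
  assume sS: "s \<in> SS" and st: "stp s lab s'"
  show "s' \<in> SS"
  proof (cases s)
    case (Rd xs ys)
    with sS have h: "set xs \<subseteq> A" "set ys \<subseteq> A" "length xs = length ys" "length xs < l"
      unfolding SS_def by auto
    from st Rd obtain a b where ab: "a \<in> A" "b \<in> A"
      "s' = (if Suc (length xs) = l then Em (code (ys@[b]) (xs@[a])) 0 else Rd (xs@[a]) (ys@[b]))"
      unfolding stp_def by auto
    show ?thesis
    proof (cases "Suc (length xs) = l")
      case True
      have "set (xs@[a]) \<subseteq> A" "length (xs@[a]) = l" using h ab True by auto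
      from code_props(1,5)[OF this, of "ys@[b]"] show ?thesis using ab True unfolding SS_def by auto
    next
      case False
      then show ?thesis using ab h unfolding SS_def by auto
    qed
  next
    case (Em w i)
    with sS st tl show ?thesis unfolding SS_def stp_def by auto
  qed
qed

lemma stp_lab: "s \<in> SS \<Longrightarrow> stp s lab s' \<Longrightarrow> opt_ok A (fst lab) \<and> opt_ok A (fst (snd lab)) \<and> opt_ok A (snd (snd lab))"
  unfolding SS_def stp_def opt_ok_def by (auto split: st.splits if_splits)

lemma stp_det: "stp s lab s1 \<Longrightarrow> stp s lab s2 \<Longrightarrow> s1 = s2"
  unfolding stp_def by (auto split: st.splits)

definition MM :: "'a aut3" where
  "MM = \<lparr>states = enc ` SS, trans = {(enc s, lab, enc s') | s lab s'. s \<in> SS \<and> stp s lab s'},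
         init = {enc (Rd [] [])}\<rparr>"

lemma Rd0_SS: "Rd [] [] \<in> SS" unfolding SS_def using tl by auto

lemma is_aut3_MM: "is_aut3 A MM"
  unfolding is_aut3_def MM_def using finSS Rd0_SS stp_SS stp_lab by auto

lemma two_det_MM: "two_det MM"
  unfolding two_det_def
proof (intro conjI)
  show "\<exists>q0. init MM = {q0}" by (simp add: MM_def)
  show "\<forall>p a1 a2 a3 q b1 b2 b3 q'.
        (p, (a1, a2, a3), q) \<in> trans MM \<longrightarrow> (p, (b1, b2, b3), q') \<in> trans MM \<longrightarrow>
          (a1 = None \<longrightarrow> b1 = None) \<and> (a2 = None \<longrightarrow> b2 = None) \<and>
          (a1 = b1 \<and> a2 = b2 \<longrightarrow> a3 = b3 \<and> q = q')"
  proof (intro allI impI)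
    fix p a1 a2 a3 q b1 b2 b3 q'
    assume t1: "(p, (a1, a2, a3), q) \<in> trans MM" and t2: "(p, (b1, b2, b3), q') \<in> trans MM"
    from t1 obtain s s' where s: "s \<in> SS" "stp s (a1,a2,a3) s'" "p = enc s" "q = enc s'"
      by (auto simp: MM_def)
    from t2 obtain r r' where r: "r \<in> SS" "stp r (b1,b2,b3) r'" "p = enc r" "q' = enc r'"
      by (auto simp: MM_def)
    have sr: "s = r" using s r enc_inj by (metis inj_on_def)
    show "(a1 = None \<longrightarrow> b1 = None) \<and> (a2 = None \<longrightarrow> b2 = None) \<and>
          (a1 = b1 \<and> a2 = b2 \<longrightarrow> a3 = b3 \<and> q = q')"
      using s r sr by (auto simp: stp_def split: st.splits)
  qed
qed

end


context cmp begin

definition PP where "PP = 2*l+1"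
definition xb :: "(nat \<Rightarrow> 'a) \<Rightarrow> nat \<Rightarrow> 'a list" where "xb X b = map (\<lambda>j. X (b*l+j)) [0..<l]"
definition cw where "cw X Y b = code (xb Y b) (xb X b)"
definition stc where
  "stc X Y n = (if n mod PP < l then Rd (take (n mod PP) (xb X (n div PP))) (take (n mod PP) (xb Y (n div PP)))
     else Em (cw X Y (n div PP)) (n mod PP - l))"
definition lab where
  "lab X Y n = (if n mod PP < l then (Some (X (n div PP * l + n mod PP)), Some (Y (n div PP * l + n mod PP)), None)
     else (None, None, if n mod PP - l < length (cw X Y (n div PP)) then Some (cw X Y (n div PP) ! (n mod PP - l)) else None))"

lemma PP_pos: "PP > 0" by (simp add: PP_def)
lemma l_pos: "l > 0" using tl by simp

lemma xb_props:
  assumes "\<forall>i. X i \<in> A"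
  shows "set (xb X b) \<subseteq> A" "length (xb X b) = l"
  using assms by (auto simp: xb_def)

lemma xb_nth: "j < l \<Longrightarrow> xb X b ! j = X (b*l+j)" by (simp add: xb_def)
lemma xb_len[simp]: "length (xb X b) = l" by (simp add: xb_def)

lemma cw_props:
  assumes "\<forall>i. X i \<in> A"
  shows "set (cw X Y b) \<subseteq> A" "cw X Y b \<noteq> []" "length (cw X Y b) \<le> Suc l" "length (cw X Y b) \<ge> 1"
    "length (cw X Y b) = (if xb X b \<in> Good (xb Y b) then l - t else Suc l)"
    "hd (cw X Y b) = c \<longleftrightarrow> xb X b \<notin> Good (xb Y b)"
  unfolding cw_def using code_props[OF xb_props[OF assms]] by auto

lemma divmod_Suc:
  "Suc (n mod PP) < PP \<Longrightarrow> Suc n div PP = n div PP \<and> Suc n mod PP = Suc (n mod PP)"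
  "Suc (n mod PP) = PP \<Longrightarrow> Suc n div PP = Suc (n div PP) \<and> Suc n mod PP = 0"
  by (auto simp: mod_Suc div_Suc)

lemma stc_SS:
  assumes X: "\<forall>i. X i \<in> A" and Y: "\<forall>i. Y i \<in> A"
  shows "stc X Y n \<in> SS"
proof (cases "n mod PP < l")
  case True
  have "set (take (n mod PP) (xb X (n div PP))) \<subseteq> A" "set (take (n mod PP) (xb Y (n div PP))) \<subseteq> A"
    using xb_props[OF X] xb_props[OF Y] set_take_subset by (meson subset_trans)+
  then show ?thesis using True unfolding SS_def stc_def by auto
next
  case False
  have "n mod PP < PP" using PP_pos by simp
  then have "n mod PP - l \<le> l" unfolding PP_def by linarith
  then show ?thesis using False cw_props[OF X] unfolding SS_def stc_def by auto
qed

lemma stc_0: "stc X Y 0 = Rd [] []" using l_pos by (simp add: stc_def)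

lemma stc_step:
  assumes X: "\<forall>i. X i \<in> A" and Y: "\<forall>i. Y i \<in> A"
  shows "stp (stc X Y n) (lab X Y n) (stc X Y (Suc n))"
proof -
  define b r where "b = n div PP" and "r = n mod PP"
  have oP: "r < PP" using PP_pos by (simp add: r_def)
  show ?thesis
  proof (cases "r < l")
    case True
    have S1: "Suc (n mod PP) < PP" using True by (simp add: r_def PP_def)
    have ds: "Suc n div PP = b" "Suc n mod PP = Suc r" using divmod_Suc(1)[OF S1] by (auto simp: b_def r_def)
    have tk: "take r (xb X b) @ [X (b*l+r)] = take (Suc r) (xb X b)"
             "take r (xb Y b) @ [Y (b*l+r)] = take (Suc r) (xb Y b)"
      using True by (auto simp: take_Suc_conv_app_nth xb_nth)
    show ?thesis
    proof (cases "Suc r = l")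
      case True2: True
      have "take (Suc r) (xb X b) = xb X b" "take (Suc r) (xb Y b) = xb Y b" using True2 by auto
      then show ?thesis using True True2 X Y ds tk unfolding stp_def stc_def lab_def
        by (auto simp: b_def[symmetric] r_def[symmetric] cw_def)
    next
      case False2: False
      then show ?thesis using True X Y ds tk unfolding stp_def stc_def lab_def
        by (auto simp: b_def[symmetric] r_def[symmetric])
    qed
  next
    case False
    show ?thesis
    proof (cases "Suc r < PP")
      case True
      have ds: "Suc n div PP = b" "Suc n mod PP = Suc r" using divmod_Suc(1)[OF True[unfolded r_def]]
        by (auto simp: b_def r_def)
      have "r - l \<noteq> l" using True False by (simp add: PP_def)
      then show ?thesis using False ds unfolding stp_def stc_def lab_def
        by (auto simp: b_def[symmetric] r_def[symmetric] Suc_diff_le)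
    next
      case False2: False
      then have eq: "Suc r = PP" using oP by simp
      have ds: "Suc n div PP = Suc b" "Suc n mod PP = 0" using divmod_Suc(2)[OF eq[unfolded r_def]]
        by (auto simp: b_def r_def)
      have "r - l = l" using eq by (simp add: PP_def)
      then show ?thesis using False ds l_pos unfolding stp_def stc_def lab_def
        by (auto simp: b_def[symmetric] r_def[symmetric])
    qed
  qed
qed

lemma stp_lab_eq:
  assumes "stp s lb s'" "stp s lb' s''" "lb = lab X Y n" "s = stc X Y n" "\<not> n mod PP < l"
  shows "lb' = lb"
  using assms unfolding stp_def stc_def by (auto split: st.splits)

end


context cmp begin

definition SB where "SB X Y B = (\<Sum>b<B. length (cw X Y b))"

lemma comp12_none: "comp1 (lab X Y) n \<noteq> None \<longleftrightarrow> n mod PP < l" "comp2 (lab X Y) n \<noteq> None \<longleftrightarrow> n mod PP < l"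
  by (auto simp: comp1_def comp2_def lab_def)

lemma comp3_none: "comp3 (lab X Y) n \<noteq> None \<longleftrightarrow> \<not> n mod PP < l \<and> n mod PP - l < length (cw X Y (n div PP))"
  by (auto simp: comp3_def lab_def)

lemma mod_lt_PP: "n mod PP < PP" using PP_pos by simp

lemma ol12:
  assumes "\<And>n. s n \<noteq> None \<longleftrightarrow> n mod PP < l"
  shows "opt_len s n = n div PP * l + min (n mod PP) l"
proof (induction n)
  case 0
  then show ?case by simp
next
  case (Suc n)
  show ?case
  proof (cases "Suc (n mod PP) < PP")
    case True
    note ds = divmod_Suc(1)[OF True]
    show ?thesis using Suc.IH assms[of n] ds by (auto simp: opt_len_Suc)
  next
    case False
    then have eq: "Suc (n mod PP) = PP" using mod_lt_PP[of n] by simp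
    note ds = divmod_Suc(2)[OF eq]
    have "n mod PP = 2*l" using eq by (simp add: PP_def)
    then show ?thesis using Suc.IH assms[of n] ds by (auto simp: opt_len_Suc)
  qed
qed

lemma ol3:
  assumes X: "\<forall>i. X i \<in> A"
  shows "opt_len (comp3 (lab X Y)) n = SB X Y (n div PP) + min (n mod PP - l) (length (cw X Y (n div PP)))"
proof (induction n)
  case 0
  then show ?case by (simp add: SB_def)
next
  case (Suc n)
  define r where "r = n mod PP"
  define b where "b = n div PP"
  show ?case
  proof (cases "Suc r < PP")
    case True
    note ds = divmod_Suc(1)[OF True[unfolded r_def]]
    show ?thesis
    proof (cases "r < l")
      case True
      then show ?thesis using Suc.IH comp3_none[of X Y n] ds
        by (auto simp: opt_len_Suc r_def[symmetric] b_def[symmetric])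
    next
      case False
      then have "Suc r - l = Suc (r - l)" by simp
      then show ?thesis using False Suc.IH comp3_none[of X Y n] ds
        by (auto simp: opt_len_Suc r_def[symmetric] b_def[symmetric])
    qed
  next
    case False
    then have eq: "Suc r = PP" using mod_lt_PP[of n] by (simp add: r_def)
    note ds = divmod_Suc(2)[OF eq[unfolded r_def]]
    have rl: "r - l = l" "\<not> r < l" using eq by (auto simp: PP_def)
    have len: "length (cw X Y b) \<le> Suc l" using cw_props(3)[OF X] .
    have "SB X Y (Suc b) = SB X Y b + length (cw X Y b)" by (simp add: SB_def)
    then show ?thesis using Suc.IH comp3_none[of X Y n] ds rl len
      by (auto simp: opt_len_Suc r_def[symmetric] b_def[symmetric])
  qed
qed

lemma infinite_by: "(\<And>N. \<exists>n\<ge>N. n \<in> S) \<Longrightarrow> infinite (S::nat set)"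
  using infinite_nat_iff_unbounded_le by blast

lemma divmod_at: "r < PP \<Longrightarrow> (b*PP + r) div PP = b \<and> (b*PP + r) mod PP = r"
  using PP_pos by simp

lemma inf1: "infinite {n. comp1 (lab X Y) n \<noteq> None}" "infinite {n. comp2 (lab X Y) n \<noteq> None}"
proof -
  have "\<exists>n\<ge>N. n \<in> {n. n mod PP < l}" for N
  proof -
    have "N \<le> N*PP" using PP_pos by simp
    moreover have "N*PP \<in> {n. n mod PP < l}" using l_pos by simp
    ultimately show ?thesis by blast
  qed
  then have i: "infinite {n. n mod PP < l}" by (rule infinite_by)
  have "{n. comp1 (lab X Y) n \<noteq> None} = {n. n mod PP < l}" "{n. comp2 (lab X Y) n \<noteq> None} = {n. n mod PP < l}"
    using comp12_none by auto
  then show "infinite {n. comp1 (lab X Y) n \<noteq> None}" "infinite {n. comp2 (lab X Y) n \<noteq> None}"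
    using i by auto
qed

lemma inf3:
  assumes X: "\<forall>i. X i \<in> A"
  shows "infinite {n. comp3 (lab X Y) n \<noteq> None}"
proof (rule infinite_by)
  fix N
  have lP: "l < PP" by (simp add: PP_def)
  have "N \<le> N*PP" using PP_pos by simp
  then have "N*PP + l \<ge> N" by linarith
  moreover have "N*PP + l \<in> {n. comp3 (lab X Y) n \<noteq> None}"
  proof -
    have m: "(N*PP+l) mod PP = l" "(N*PP+l) div PP = N" using divmod_at[OF lP, of N] by auto
    have "comp3 (lab X Y) (N*PP + l) \<noteq> None"
      by (simp only: comp3_none m) (use cw_props(2)[OF X, of Y N] in simp)
    then show ?thesis by simp
  qed
  ultimately show "\<exists>n\<ge>N. n \<in> {n. comp3 (lab X Y) n \<noteq> None}" by blast
qed

lemma ow1: "opt_word (comp1 (lab X Y)) = X" "opt_word (comp2 (lab X Y)) = Y"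
proof -
  have key: "opt_len (comp1 (lab X Y)) ((i div l)*PP + i mod l) = i \<and>
        opt_len (comp2 (lab X Y)) ((i div l)*PP + i mod l) = i \<and>
        comp1 (lab X Y) ((i div l)*PP + i mod l) = Some (X i) \<and>
        comp2 (lab X Y) ((i div l)*PP + i mod l) = Some (Y i)" for i
  proof -
    have r2: "i mod l < l" using l_pos by simp
    have r: "i mod l < PP" "i mod l < l" using r2 by (auto simp: PP_def)
    note dm = divmod_at[OF r(1), of "i div l"]
    show ?thesis using r(2) dm
      by (simp add: ol12[OF comp12_none(1)] ol12[OF comp12_none(2)] comp1_def comp2_def lab_def)
  qed
  show "opt_word (comp1 (lab X Y)) = X"
  proof
    fix i show "opt_word (comp1 (lab X Y)) i = X i"
      using opt_word_at[OF inf1(1)[of X Y], where n="(i div l)*PP + i mod l"] key[of i] by simp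
  qed
  show "opt_word (comp2 (lab X Y)) = Y"
  proof
    fix i show "opt_word (comp2 (lab X Y)) i = Y i"
      using opt_word_at[OF inf1(2)[of X Y], where n="(i div l)*PP + i mod l"] key[of i] by simp
  qed
qed

lemma ow3:
  assumes X: "\<forall>i. X i \<in> A" and j: "j < length (cw X Y b)"
  shows "opt_word (comp3 (lab X Y)) (SB X Y b + j) = cw X Y b ! j"
proof -
  have jl: "j \<le> l" using j cw_props(3)[OF X, of Y b] by simp
  have r: "l + j < PP" using jl by (simp add: PP_def)
  note dm = divmod_at[OF r, of b]
  have n: "b*PP + l + j = b*PP + (l + j)" by simp
  have "opt_len (comp3 (lab X Y)) (b*PP + l + j) = SB X Y b + j"
    using dm j by (simp only: n ol3[OF X])
  moreover have "comp3 (lab X Y) (b*PP + l + j) = Some (cw X Y b ! j)"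
    using dm j by (simp only: n) (simp add: comp3_def lab_def)
  ultimately show ?thesis using opt_word_at[OF inf3[OF X, of Y], where n="b*PP + l + j"] by simp
qed

lemma acc_canon:
  assumes X: "\<forall>i. X i \<in> A" and Y: "\<forall>i. Y i \<in> A"
  shows "accepting MM (\<lambda>n. enc (stc X Y n)) (lab X Y)"
proof -
  have "(enc (stc X Y n), lab X Y n, enc (stc X Y (Suc n))) \<in> {(enc s, lb, enc s') | s lb s'. s \<in> SS \<and> stp s lb s'}" for n
    using stc_SS[OF X Y] stc_step[OF X Y] by blast
  then have "(enc (stc X Y n), lab X Y n, enc (stc X Y (Suc n))) \<in> trans MM" for n
    by (simp add: MM_def)
  then show ?thesis unfolding accepting_def
    using inf1 inf3[OF X] stc_0 by (auto simp: MM_def)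
qed

end


context cmp begin

lemma run_step:
  assumes acc: "accepting MM qs ls" and X: "\<forall>i. X i \<in> A" and Y: "\<forall>i. Y i \<in> A"
    and Xd: "\<And>i a. comp1 ls ((i div l)*PP + i mod l) = Some a \<Longrightarrow> a \<in> A \<Longrightarrow> X i = a"
    and Yd: "\<And>i a. comp2 ls ((i div l)*PP + i mod l) = Some a \<Longrightarrow> a \<in> A \<Longrightarrow> Y i = a"
    and q: "qs n = enc (stc X Y n)"
  shows "ls n = lab X Y n \<and> qs (Suc n) = enc (stc X Y (Suc n))"
proof -
  have "(qs n, ls n, qs (Suc n)) \<in> trans MM" using acc by (simp add: accepting_def)
  then obtain s s' where s: "qs n = enc s" "s \<in> SS" "stp s (ls n) s'" "qs (Suc n) = enc s'"
    by (auto simp: MM_def)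
  have ss: "s = stc X Y n" using s(1,2) q stc_SS[OF X Y] enc_inj by (metis inj_on_def)
  have lb: "ls n = lab X Y n"
  proof (cases "n mod PP < l")
    case True
    define b r where "b = n div PP" and "r = n mod PP"
    have rl: "r < l" using True by (simp add: r_def)
    have g: "((b*l + r) div l)*PP + (b*l + r) mod l = n"
      using rl by (simp add: b_def r_def)
    from s(3) ss True obtain a b' where ab: "a \<in> A" "b' \<in> A" "ls n = (Some a, Some b', None)"
      unfolding stp_def stc_def by auto
    have "X (b*l+r) = a" using Xd[of "b*l+r" a] g ab by (simp add: comp1_def)
    moreover have "Y (b*l+r) = b'" using Yd[of "b*l+r" b'] g ab by (simp add: comp2_def)
    ultimately show ?thesis using ab True by (simp add: lab_def b_def r_def)
  next
    case False
    show ?thesis using stp_lab_eq[OF stc_step[OF X Y, of n] s(3)[unfolded ss] refl refl False] .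
  qed
  have "s' = stc X Y (Suc n)" using stp_det[OF s(3)[unfolded ss lb] stc_step[OF X Y]] .
  then show ?thesis using lb s(4) by simp
qed

lemma run_canon:
  assumes acc: "accepting MM qs ls"
  shows "\<exists>X Y. (\<forall>i. X i \<in> A) \<and> (\<forall>i. Y i \<in> A) \<and> ls = lab X Y"
proof -
  define X where "X i = (case comp1 ls ((i div l)*PP + i mod l) of Some a \<Rightarrow> if a \<in> A then a else c | None \<Rightarrow> c)" for i
  define Y where "Y i = (case comp2 ls ((i div l)*PP + i mod l) of Some a \<Rightarrow> if a \<in> A then a else c | None \<Rightarrow> c)" for i
  have XA: "\<forall>i. X i \<in> A" using cA by (auto simp: X_def split: option.splits)
  have YA: "\<forall>i. Y i \<in> A" using cA by (auto simp: Y_def split: option.splits)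
  have Xd: "\<And>i a. comp1 ls ((i div l)*PP + i mod l) = Some a \<Longrightarrow> a \<in> A \<Longrightarrow> X i = a" by (simp add: X_def)
  have Yd: "\<And>i a. comp2 ls ((i div l)*PP + i mod l) = Some a \<Longrightarrow> a \<in> A \<Longrightarrow> Y i = a" by (simp add: Y_def)
  have q: "qs n = enc (stc X Y n)" for n
  proof (induction n)
    case 0
    then show ?case using acc stc_0 by (simp add: accepting_def MM_def)
  next
    case (Suc n)
    then show ?case using run_step[OF acc XA YA Xd Yd] by blast
  qed
  have "ls n = lab X Y n" for n using run_step[OF acc XA YA Xd Yd q] by blast
  then show ?thesis using XA YA by blast
qed

lemma out_inj:
  assumes X: "\<forall>i. X i \<in> A" and X': "\<forall>i. X' i \<in> A"
    and eq: "opt_word (comp3 (lab X Y)) = opt_word (comp3 (lab X' Y))"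
  shows "X = X'"
proof -
  have blk: "xb X b = xb X' b" for b
  proof (induction b rule: less_induct)
    case (less b)
    have SBe: "SB X Y b = SB X' Y b" unfolding SB_def cw_def using less by simp
    let ?w = "cw X Y b" and ?w' = "cw X' Y b" and ?u = "xb Y b"
    have ne: "?w \<noteq> []" "?w' \<noteq> []" using cw_props(2)[OF X] cw_props(2)[OF X'] by auto
    have w0: "?w ! 0 = ?w' ! 0"
      using ow3[OF X, of 0 Y b] ow3[OF X', of 0 Y b] ne eq SBe by simp
    have "hd ?w = hd ?w'" using w0 ne by (simp add: hd_conv_nth)
    then have gg: "xb X b \<in> Good ?u \<longleftrightarrow> xb X' b \<in> Good ?u"
      using cw_props(6)[OF X, of Y b] cw_props(6)[OF X', of Y b] by simp
    have len: "length ?w = length ?w'" using cw_props(5)[OF X, of Y b] cw_props(5)[OF X', of Y b] gg by simp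
    have "?w = ?w'"
    proof (rule nth_equalityI[OF len])
      fix j assume "j < length ?w"
      then show "?w ! j = ?w' ! j" using ow3[OF X, of j Y b] ow3[OF X', of j Y b] len eq SBe by simp
    qed
    then show ?case using code_inj[OF xb_props[OF X] xb_props[OF X']] unfolding cw_def by blast
  qed
  show ?thesis
  proof
    fix i
    have i: "i = (i div l)*l + i mod l" by simp
    have il: "i mod l < l" using l_pos by simp
    have "X i = xb X (i div l) ! (i mod l)" using xb_nth[OF il] i by metis
    also have "\<dots> = xb X' (i div l) ! (i mod l)" using blk by simp
    also have "\<dots> = X' i" using xb_nth[OF il] i by metis
    finally show "X i = X' i" .
  qed
qed

lemma compressor_MM: "compressor A MM"
  unfolding compressor_def
proof (intro conjI is_aut3_MM two_det_MM allI impI)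
  fix qs ls qs' ls'
  assume a: "accepting MM qs ls" "accepting MM qs' ls'"
    and e2: "opt_word (comp2 ls) = opt_word (comp2 ls')"
    and e3: "opt_word (comp3 ls) = opt_word (comp3 ls')"
  obtain X Y where XY: "\<forall>i. X i \<in> A" "\<forall>i. Y i \<in> A" "ls = lab X Y" using run_canon[OF a(1)] by blast
  obtain X' Y' where XY': "\<forall>i. X' i \<in> A" "\<forall>i. Y' i \<in> A" "ls' = lab X' Y'" using run_canon[OF a(2)] by blast
  have "Y = Y'" using e2 XY(3) XY'(3) ow1(2) by metis
  then have "X = X'" using out_inj[OF XY(1) XY'(1)] e3 XY(3) XY'(3) by simp
  then show "opt_word (comp1 ls) = opt_word (comp1 ls')" using XY(3) XY'(3) by (simp add: ow1)
qed

lemma ratio_bound: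
  assumes X: "\<forall>i. X i \<in> A"
    and fr: "\<And>N. \<exists>B\<ge>N. B > 0 \<and> real (SB X Y B) \<le> C * real (B*l)"
  shows "run_ratio (lab X Y) \<le> ereal C"
proof -
  let ?f = "\<lambda>n. ereal (real (opt_len (comp3 (lab X Y)) n) / real (opt_len (comp1 (lab X Y)) n))"
  have at: "?f (B*PP) = ereal (real (SB X Y B) / real (B*l))" for B
  proof -
    have dm: "B*PP div PP = B" "B*PP mod PP = 0" using PP_pos by auto
    show ?thesis using dm by (simp add: ol3[OF X] ol12[OF comp12_none(1)])
  qed
  have "(SUP n. INF m\<in>{n..}. ?f m) \<le> ereal C"
  proof (rule SUP_least)
    fix n
    obtain B where B: "B \<ge> n" "B > 0" "real (SB X Y B) \<le> C * real (B*l)" using fr by blast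
    have "B*PP \<ge> n" using B PP_pos by (metis le_trans mult_le_mono2 nat_mult_1_right Suc_leI One_nat_def)
    then have "(INF m\<in>{n..}. ?f m) \<le> ?f (B*PP)" by (intro INF_lower) simp
    also have "\<dots> \<le> ereal C"
    proof -
      have pos: "real (B*l) > 0" using B l_pos by simp
      have "real (SB X Y B) / real (B*l) \<le> C" using B(3) pos by (simp add: divide_le_eq)
      then show ?thesis using at by simp
    qed
    finally show "(INF m\<in>{n..}. ?f m) \<le> ereal C" .
  qed
  then show ?thesis unfolding run_ratio_def liminf_SUP_INF .
qed

end


definition FF :: "'a \<Rightarrow> 'a \<Rightarrow> 'a \<Rightarrow> (nat \<Rightarrow> 'a) \<Rightarrow> (nat \<Rightarrow> 'a) \<Rightarrow> nat \<Rightarrow> real" where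
  "FF c c' d x y n = (\<Sum>i<n. ee c c' d (y i) (x i))"

lemma card_Suc_filter: "card {i. i < Suc n \<and> P i} = card {i. i < n \<and> P i} + (if P n then 1 else 0)"
proof -
  have "{i. i < Suc n \<and> P i} = {i. i < n \<and> P i} \<union> (if P n then {n} else {})"
    by (auto simp: less_Suc_eq)
  then show ?thesis by (auto simp: card_insert_if)
qed

lemma FF_card:
  assumes "c \<noteq> c'"
  shows "FF c c' d x y n = real (card {i. i < n \<and> x i = c \<and> y i = d}) - real (card {i. i < n \<and> x i = c' \<and> y i = d})"
proof (induction n)
  case 0
  then show ?case by (simp add: FF_def)
next
  case (Suc n)
  have "FF c c' d x y (Suc n) = FF c c' d x y n + ee c c' d (y n) (x n)" by (simp add: FF_def)
  then show ?case using Suc assms by (simp add: card_Suc_filter ee_def)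
qed

lemma ee_abs: "\<bar>ee c c' d b a\<bar> \<le> 1" by (simp add: ee_def)

lemma FF_lip: "\<bar>FF c c' d x y (n + k) - FF c c' d x y n\<bar> \<le> real k"
proof (induction k)
  case 0
  then show ?case by simp
next
  case (Suc k)
  have "FF c c' d x y (n + Suc k) = FF c c' d x y (n + k) + ee c c' d (y (n+k)) (x (n+k))" by (simp add: FF_def)
  then show ?case using Suc ee_abs[of c c' d "y (n+k)" "x (n+k)"] by linarith
qed

lemma beta_lt1:
  fixes k M :: nat
  assumes k: "k \<ge> 2" and M: "M \<ge> 2"
  shows "(real k + (1 + 1/real M) + 1/(1 + 1/real M) - 2)^M < (1 + 1/real M) * real k ^ M"
proof -
  define z where "z = 1 + 1/real M"
  define a where "a = 1 / (real k * real M ^ 2)"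
  have Mp: "real M \<ge> 2" using M by simp
  have kp: "real k \<ge> 2" using k by simp
  have z1: "z \<ge> 1" by (simp add: z_def)
  have "z + 1/z - 2 = (z - 1)^2 / z" using z1 by (simp add: field_simps power2_eq_square)
  also have "\<dots> \<le> (z - 1)^2" using z1 by (simp add: divide_le_eq) (simp add: mult_le_cancel_left1)
  also have "(z-1)^2 = 1 / real M ^ 2" by (simp add: z_def power_divide)
  finally have zb: "z + 1/z - 2 \<le> 1 / real M ^ 2" .
  have Kle: "real k + z + 1/z - 2 \<le> real k * (1 + a)"
    using zb kp by (simp add: a_def field_simps)
  have iz: "1/z \<ge> 0" using z1 by simp
  have K0: "0 \<le> real k + z + 1/z - 2" using z1 kp iz by linarith
  have M2: "real M ^ 2 \<ge> 1" using Mp by (simp add: one_le_power)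
  have kM2: "real k * real M ^ 2 \<ge> 1 * 1" using kp M2 by (intro mult_mono) auto
  have a0: "0 \<le> a" "a \<le> 1" using kM2 by (auto simp: a_def)
  have Ma: "real M * a = 1 / (real k * real M)" using Mp by (simp add: a_def power2_eq_square)
  have kM: "real k * real M \<ge> 2 * 2" using kp Mp by (intro mult_mono) auto
  have Ma1: "real M * a < 1" unfolding Ma using kM by simp
  have bern: "1 - real M * a \<le> (1 - a)^M"
    using Bernoulli_inequality[of "-a" M] a0 by simp
  have "(1 + a)^M * (1 - a)^M = (1 - a^2)^M" by (simp add: power_mult_distrib[symmetric] power2_eq_square algebra_simps)
  also have "\<dots> \<le> 1" using a0 by (intro power_le_one) (auto simp: power2_eq_square mult_le_one)
  finally have p1: "(1 + a)^M * (1 - a)^M \<le> 1" .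
  have p2: "(1 + a)^M * (1 - real M * a) \<le> (1 + a)^M * (1 - a)^M"
    using bern a0 by (intro mult_left_mono) auto
  have key: "1 < z * (1 - real M * a)"
  proof -
    have e: "z * (1 - real M * a) = (real M + 1) * (real k * real M - 1) / (real k * real M ^ 2)"
      unfolding z_def Ma using Mp kp by (simp add: field_simps power2_eq_square)
    have pos: "real k * real M ^ 2 > 0" using kp Mp by simp
    have gt: "(real M + 1) * (real k * real M - 1) > real k * real M ^ 2"
    proof -
      have "real k * real M \<ge> 2 * real M" using kp Mp by (simp add: mult_right_mono)
      then have "real k * real M - real M - 1 > 0" using Mp by linarith
      moreover have "(real M + 1) * (real k * real M - 1) = real k * real M^2 + (real k * real M - real M - 1)"
        by (simp add: algebra_simps power2_eq_square)
      ultimately show ?thesis by linarith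
    qed
    have "1 < (real M + 1) * (real k * real M - 1) / (real k * real M ^ 2)"
      using gt pos by (simp add: less_divide_eq)
    then show ?thesis using e by simp
  qed
  have "(1 + a)^M < z"
  proof -
    have "(1 + a)^M * (1 - real M * a) < z * (1 - real M * a)" using p1 p2 key by linarith
    then show ?thesis using Ma1 by (simp add: mult_less_cancel_right)
  qed
  have "(real k + z + 1/z - 2)^M \<le> (real k * (1 + a))^M"
    by (rule power_mono[OF Kle K0])
  also have "\<dots> = real k ^ M * (1 + a)^M" by (simp add: power_mult_distrib)
  also have "\<dots> < real k ^ M * z" using \<open>(1 + a)^M < z\<close> kp by simp
  finally show ?thesis by (simp add: z_def mult.commute)
qed

lemma card_T_ge:
  assumes "finite A" "c \<in> A"
  shows "(card A - 1) * card A ^ r \<le> card {w. set w \<subseteq> A \<and> length w = Suc r \<and> hd w \<noteq> c}"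
proof -
  let ?L = "{v. set v \<subseteq> A \<and> length v = r}"
  have sub: "(\<lambda>(a, v). a # v) ` ((A - {c}) \<times> ?L) \<subseteq> {w. set w \<subseteq> A \<and> length w = Suc r \<and> hd w \<noteq> c}"
    by auto
  have inj: "inj_on (\<lambda>(a, v). a # v) ((A - {c}) \<times> ?L)" by (auto simp: inj_on_def)
  have fin: "finite {w. set w \<subseteq> A \<and> length w = Suc r \<and> hd w \<noteq> c}"
    using finite_lists_length_eq[OF assms(1), of "Suc r"] by (rule finite_subset[rotated]) auto
  have "card ((\<lambda>(a, v). a # v) ` ((A - {c}) \<times> ?L)) = (card A - 1) * card A ^ r"
    using assms by (simp add: card_image[OF inj] card_cartesian_product card_lists_length_eq)
  then show ?thesis using card_mono[OF fin sub] by simp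
qed

context cmp begin

lemma block_sum: "(\<Sum>b<B. Dl c c' d (xb y b) (xb x b)) = FF c c' d x y (B*l)"
proof -
  have "Dl c c' d (xb y b) (xb x b) = (\<Sum>i\<in>{b*l..<b*l+l}. ee c c' d (y i) (x i))" for b
  proof -
    have "Dl c c' d (xb y b) (xb x b) = (\<Sum>j<l. ee c c' d (y (b*l+j)) (x (b*l+j)))"
      by (simp add: Dl_def xb_nth)
    also have "\<dots> = (\<Sum>i\<in>{0+b*l..<l+b*l}. ee c c' d (y i) (x i))"
      by (subst sum.shift_bounds_nat_ivl) (simp add: lessThan_atLeast0 add.commute)
    finally show ?thesis by (simp add: add.commute)
  qed
  then show ?thesis unfolding FF_def by (simp add: sum.nat_group)
qed

lemma freq_bound:
  fixes \<delta> :: real and M B :: nat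
  assumes X: "\<forall>i. x i \<in> A" and Y: "\<forall>i. y i \<in> A"
    and lM: "l = M * h" and dM: "4 \<le> \<delta> * real M" and dt: "4 \<le> \<delta> * real (Suc t)"
    and B: "2 * Suc t \<le> B"
    and F: "FF c c' d x y (B*l) \<ge> (3*\<delta>/4) * real B * real l - real l"
  shows "real (SB x y B) \<le> (1 - 1/(2*real l)) * real (B*l)"
proof -
  define g where "g b = (if xb x b \<in> Good (xb y b) then 1 else 0::real)" for b
  define Gs where "Gs = (\<Sum>b<B. g b)"
  have lp: "real l > 0" using l_pos by simp
  have Mp: "real M > 0" using lM l_pos by (cases M) auto
  have d0: "\<delta> > 0" using dM Mp by (smt (verit) mult_nonpos_nonneg of_nat_0_le_iff)
  have Dle: "Dl c c' d (xb y b) (xb x b) \<le> real l * g b + real h" for b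
  proof (cases "xb x b \<in> Good (xb y b)")
    case True
    have "Dl c c' d (xb y b) (xb x b) \<le> (\<Sum>j<l. 1)" unfolding Dl_def xb_len
      by (rule sum_mono) (simp add: ee_def)
    then show ?thesis using True by (simp add: g_def)
  next
    case False
    then show ?thesis using xb_props[OF X] by (simp add: g_def Good_def)
  qed
  have "FF c c' d x y (B*l) \<le> (\<Sum>b<B. real l * g b + real h)"
    unfolding block_sum[symmetric] by (rule sum_mono) (rule Dle)
  also have "\<dots> = real l * Gs + real B * real h" by (simp add: Gs_def sum.distrib sum_distrib_left)
  finally have h1: "real l * Gs + real B * real h \<ge> (3*\<delta>/4) * real B * real l - real l" using F by linarith
  have h2: "real B * real h \<le> (\<delta>/4) * real B * real l"
  proof -
    have rl: "real l = real M * real h" using lM by simp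
    have "(\<delta>/4) * real B * real l = (real B * real h) * (\<delta> * real M / 4)" by (simp add: rl algebra_simps)
    moreover have "(real B * real h) * (\<delta> * real M / 4) \<ge> real B * real h * 1"
      using dM by (intro mult_left_mono) auto
    ultimately show ?thesis by linarith
  qed
  have "real l * Gs \<ge> real l * ((\<delta>/2) * real B - 1)" using h1 h2 by (simp add: algebra_simps)
  then have h3: "Gs \<ge> (\<delta>/2) * real B - 1" using lp by (simp add: mult_le_cancel_left_pos)
  have len: "real (length (cw x y b)) = real l + 1 - real (Suc t) * g b" for b
    using cw_props(5)[OF X, of y b] tl by (auto simp: g_def of_nat_diff)
  have "real (SB x y B) = (\<Sum>b<B. real l + 1 - real (Suc t) * g b)"
    unfolding SB_def of_nat_sum using len by simp
  also have "\<dots> = real B * (real l + 1) - real (Suc t) * Gs"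
    by (simp add: Gs_def sum_subtractf sum_distrib_left)
  finally have SBe: "real (SB x y B) = real B * (real l + 1) - real (Suc t) * Gs" .
  have "real (Suc t) * Gs \<ge> real (Suc t) * ((\<delta>/2) * real B - 1)"
    using h3 by (intro mult_left_mono) auto
  moreover have "real (Suc t) * ((\<delta>/2) * real B - 1) \<ge> 2 * real B - real (Suc t)"
  proof -
    have "real (Suc t) * ((\<delta>/2) * real B) = (\<delta> * real (Suc t)) * real B / 2" by simp
    moreover have "(\<delta> * real (Suc t)) * real B \<ge> 4 * real B" using dt by (intro mult_right_mono) auto
    ultimately show ?thesis by (simp add: right_diff_distrib algebra_simps)
  qed
  ultimately have "real (SB x y B) \<le> real B * real l - real B + real (Suc t)"
    using SBe by (simp add: algebra_simps)
  also have "\<dots> \<le> real B * real l - real B / 2" using B by simp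
  also have "\<dots> = (1 - 1/(2*real l)) * real (B*l)" using lp by (simp add: field_simps)
  finally show ?thesis .
qed

end


lemma main:
  fixes A :: "'a set" and x y :: "nat \<Rightarrow> 'a" and c c' d :: 'a
    and m :: "nat \<Rightarrow> nat" and L L' :: real
  assumes finA: "finite A"
    and X: "\<And>i. x i \<in> A" and Y: "\<And>i. y i \<in> A"
    and cA: "c \<in> A" and c'A: "c' \<in> A" and dA: "d \<in> A"
    and sm: "strict_mono m"
    and l1: "(\<lambda>n. real (card {i. i < m n \<and> x i = c \<and> y i = d}) / real (m n)) \<longlonglongrightarrow> L"
    and l2: "(\<lambda>n. real (card {i. i < m n \<and> x i = c' \<and> y i = d}) / real (m n)) \<longlonglongrightarrow> L'"
    and LL: "L' < L"
  shows "rho A x y < 1"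
proof -
  have cc: "c \<noteq> c'"
  proof
    assume "c = c'"
    then have "L = L'" using l1 l2 LIMSEQ_unique by auto
    then show False using LL by simp
  qed
  define k where "k = card A"
  have k2: "k \<ge> 2"
  proof -
    have "{c, c'} \<subseteq> A" using cA c'A by auto
    then have "card {c,c'} \<le> card A" using finA card_mono by blast
    then show ?thesis using cc by (simp add: k_def)
  qed
  define \<delta> where "\<delta> = L - L'"
  have d0: "\<delta> > 0" using LL by (simp add: \<delta>_def)
  obtain n0 :: nat where n0: "4/\<delta> < real n0" using reals_Archimedean2 by blast
  define M where "M = n0 + 2"
  have M2: "M \<ge> 2" by (simp add: M_def)
  have dM: "4 \<le> \<delta> * real M"
  proof -
    have "4 < \<delta> * real n0" using n0 d0 by (simp add: divide_less_eq mult.commute)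
    then show ?thesis using d0 by (simp add: M_def algebra_simps)
  qed
  define t where "t = M"
  have dt: "4 \<le> \<delta> * real (Suc t)" using dM d0 by (simp add: t_def algebra_simps)
  define z where "z = 1 + 1 / real M"
  define K where "K = real k + z + 1/z - 2"
  define \<beta> where "\<beta> = K^M / (z * real k ^ M)"
  have z1: "z \<ge> 1" by (simp add: z_def)
  have zkpos: "z * real k ^ M > 0" using z1 k2 by simp
  have Klt: "K^M < z * real k ^ M" using beta_lt1[OF k2 M2] by (simp add: K_def z_def)
  have iz: "1/z \<ge> 0" using z1 by simp
  have kr: "real k \<ge> 2" using k2 by simp
  have K0: "K \<ge> 0" using z1 kr iz unfolding K_def by linarith
  have b1: "\<beta> < 1" using Klt zkpos by (simp add: \<beta>_def divide_less_eq)
  have b0: "\<beta> \<ge> 0" using K0 zkpos by (simp add: \<beta>_def)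
  obtain h0 where h0: "\<beta>^h0 < 1 / real k ^ Suc t" using real_arch_pow_inv[OF _ b1, of "1 / real k ^ Suc t"] k2 by auto
  define h where "h = h0 + Suc t"
  define l where "l = M * h"
  have bh: "\<beta>^h \<le> \<beta>^h0" using b0 b1 by (intro power_decreasing) (auto simp: h_def)
  have hl: "h \<le> l" using M2 by (simp add: l_def)
  have tl: "t < l" using hl by (simp add: h_def)
  have cardG: "card {v. set v \<subseteq> A \<and> length v = l \<and> Dl c c' d u v \<ge> real h}
                   \<le> card {w. set w \<subseteq> A \<and> length w = l - t \<and> hd w \<noteq> c}" if lu: "length u = l" for u
  proof -
    let ?G = "{v. set v \<subseteq> A \<and> length v = l \<and> Dl c c' d u v \<ge> real h}"
    have mk: "real (card ?G) * z^h \<le> K ^ l"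
      using markov_count[OF finA cA c'A cc z1, where u=u and d=d and h=h] lu by (simp add: K_def k_def)
    have "K ^ l = (K^M)^h" by (simp add: l_def power_mult)
    also have "K^M = \<beta> * (z * real k ^ M)"
    proof -
      have D0: "z * real k ^ M \<noteq> 0" using zkpos by linarith
      show ?thesis using nonzero_eq_divide_eq[OF D0, of \<beta> "K^M"] by (simp add: \<beta>_def)
    qed
    finally have "K ^ l = \<beta>^h * z^h * real k ^ l" by (simp add: power_mult_distrib l_def power_mult)
    then have "real (card ?G) * z^h \<le> (\<beta>^h * real k ^ l) * z^h" using mk by (simp add: algebra_simps)
    then have g1: "real (card ?G) \<le> \<beta>^h * real k ^ l" using z1 by simp
    have "\<beta>^h * real k ^ l < (1 / real k ^ Suc t) * real k ^ l"
      using bh h0 k2 by (intro mult_strict_right_mono) auto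
    also have "\<dots> = real k ^ (l - Suc t)"
      using tl k2 by (simp add: power_diff)
    finally have g2: "real (card ?G) < real k ^ (l - Suc t)" using g1 by linarith
    have lt: "l - t = Suc (l - Suc t)" using tl by simp
    have "(k - 1) * k ^ (l - Suc t) \<le> card {w. set w \<subseteq> A \<and> length w = l - t \<and> hd w \<noteq> c}"
      unfolding lt k_def using card_T_ge[OF finA cA] by blast
    moreover have "k ^ (l - Suc t) \<le> (k - 1) * k ^ (l - Suc t)" using k2 by simp
    ultimately have "real (k ^ (l - Suc t)) \<le> real (card {w. set w \<subseteq> A \<and> length w = l - t \<and> hd w \<noteq> c})"
      by linarith
    then show ?thesis using g2 by simp
  qed
  interpret cmp A c c' d l t h
    using finA cA c'A dA cc tl cardG by unfold_locales auto
  have XA: "\<forall>i. x i \<in> A" and YA: "\<forall>i. y i \<in> A" using X Y by auto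
  have lp: "l > 0" using tl by simp
  let ?f = "\<lambda>n. real (card {i. i < m n \<and> x i = c \<and> y i = d}) / real (m n) -
                 real (card {i. i < m n \<and> x i = c' \<and> y i = d}) / real (m n)"
  have "?f \<longlonglongrightarrow> \<delta>" unfolding \<delta>_def by (intro tendsto_diff l1 l2)
  then have "eventually (\<lambda>n. 3*\<delta>/4 < ?f n) sequentially" using d0 by (intro order_tendstoD(1)) auto
  then obtain N1 where N1: "\<And>n. n \<ge> N1 \<Longrightarrow> 3*\<delta>/4 < ?f n" by (auto simp: eventually_sequentially)
  have fr: "\<exists>B\<ge>N. B > 0 \<and> real (SB x y B) \<le> (1 - 1/(2*real l)) * real (B*l)" for N
  proof -
    define n where "n = N1 + l * (N + 2 * Suc t + 1)"
    define B where "B = m n div l"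
    have mn: "n \<le> m n" using seq_suble[OF sm] .
    have "l * (N + 2 * Suc t + 1) \<le> m n" using mn by (simp add: n_def)
    then have "(l * (N + 2 * Suc t + 1)) div l \<le> B" unfolding B_def by (rule div_le_mono)
    then have BN: "N + 2 * Suc t + 1 \<le> B" using lp by simp
    have "l \<le> n" unfolding n_def by (simp add: trans_le_add2)
    then have mpos: "m n > 0" using mn lp by linarith
    have dec: "m n = B*l + m n mod l" by (simp add: B_def)
    have modl: "m n mod l < l" using lp by simp
    have fn: "3*\<delta>/4 < ?f n" using N1 by (simp add: n_def)
    have "?f n = FF c c' d x y (m n) / real (m n)" using FF_card[OF cc] by (simp add: diff_divide_distrib)
    then have "FF c c' d x y (m n) > (3*\<delta>/4) * real (m n)" using fn mpos by (simp add: less_divide_eq)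
    moreover have "(3*\<delta>/4) * real (m n) \<ge> (3*\<delta>/4) * (real B * real l)"
    proof -
      have "B*l \<le> m n" using dec by linarith
      then have "real B * real l \<le> real (m n)" by (metis of_nat_le_iff of_nat_mult)
      then show ?thesis using d0 by (intro mult_left_mono) auto
    qed
    moreover have "FF c c' d x y (B*l) \<ge> FF c c' d x y (m n) - real l"
    proof -
      have "\<bar>FF c c' d x y (B*l + m n mod l) - FF c c' d x y (B*l)\<bar> \<le> real (m n mod l)"
        by (rule FF_lip)
      moreover have "real (m n mod l) \<le> real l" using modl by simp
      moreover have "FF c c' d x y (m n) = FF c c' d x y (B*l + m n mod l)" using dec by metis
      ultimately show ?thesis by linarith
    qed
    ultimately have F: "FF c c' d x y (B*l) \<ge> (3*\<delta>/4) * real B * real l - real l" by simp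
    have "real (SB x y B) \<le> (1 - 1/(2*real l)) * real (B*l)"
      by (rule freq_bound[OF XA YA _ dM dt _ F]) (use BN in \<open>auto simp: l_def t_def\<close>)
    then show ?thesis using BN by (intro exI[of _ B]) auto
  qed
  have rr: "run_ratio (lab x y) \<le> ereal (1 - 1/(2*real l))" by (rule ratio_bound[OF XA fr])
  have mem: "run_ratio (lab x y) \<in> {run_ratio ls | M qs ls. compressor A M \<and> accepting M qs ls \<and>
       opt_word (comp1 ls) = x \<and> opt_word (comp2 ls) = y}"
    using compressor_MM acc_canon[OF XA YA] ow1 by blast
  have "rho A x y \<le> run_ratio (lab x y)" unfolding rho_def using mem by (rule Inf_lower)
  also have "\<dots> \<le> ereal (1 - 1/(2*real l))" by (rule rr)
  also have "\<dots> < 1" using lp by simp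
  finally show ?thesis .
qed

theorem proposition4:
  fixes A :: "'a set" and x y :: "nat \<Rightarrow> 'a" and c c' d :: 'a
    and m :: "nat \<Rightarrow> nat" and L L' :: real
  assumes "finite A"
    and "\<And>i. x i \<in> A" and "\<And>i. y i \<in> A"
    and "c \<in> A" and "c' \<in> A" and "d \<in> A"
    and "strict_mono m"
    and "(\<lambda>n. real (card {i. i < m n \<and> x i = c \<and> y i = d}) / real (m n)) \<longlonglongrightarrow> L"
    and "(\<lambda>n. real (card {i. i < m n \<and> x i = c' \<and> y i = d}) / real (m n)) \<longlonglongrightarrow> L'"
    and "L \<noteq> L'"
  shows "rho A x y < 1"
proof (cases "L' < L")
  case True
  then show ?thesis using main[OF assms(1-9)] by blast
next
  case False
  then have "L < L'" using assms(10) by simp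
  then show ?thesis using main[OF assms(1-3) assms(5) assms(4) assms(6-7) assms(9) assms(8)] by blast
qed


end
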